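(* Let $\varphi:\mathbb D\to G_2$ be a complex geodesic. Then exactly one of the following occurs: (i) $\varphi(\mathbb D)\cap S=\emptyset$; (ii) $\varphi(\mathbb D)\cap S$ consists of exactly one point; (iii) $\varphi(\mathbb D)=S$. Moreover, for each of (i), (ii), (iii) there exists a complex geodesic of $G_2$ satisfying it. *)

theory Defs
  imports "HOL-Analysis.Analysis"
begin

abbreviation disc :: "complex set" where "disc \<equiv> ball 0 1"

definition G2 :: "(complex \<times> complex) set" where
  "G2 = {(z1 + z2, z1 * z2) | z1 z2. z1 \<in> disc \<and> z2 \<in> disc}"

definition royal :: "(complex \<times> complex) set" where
  "royal = {(2 * l, l ^ 2) | l. l \<in> disc}"

definition holo2 :: "(complex \<times> complex \<Rightarrow> complex) \<Rightarrow> (complex \<times> complex) set \<Rightarrow> bool" where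
  "holo2 f U \<longleftrightarrow> (\<forall>z\<in>U. \<exists>a b. (f has_derivative (\<lambda>h. a * fst h + b * snd h)) (at z))"

definition poincare :: "complex \<Rightarrow> complex \<Rightarrow> real" where
  "poincare a b = artanh (cmod ((a - b) / (1 - cnj b * a)))"

definition carath :: "(complex \<times> complex) set \<Rightarrow> complex \<times> complex \<Rightarrow> complex \<times> complex \<Rightarrow> real" where
  "carath U z w = (SUP f \<in> {f. holo2 f U \<and> f ` U \<subseteq> disc}. poincare (f z) (f w))"

definition holo_disc_map :: "(complex \<Rightarrow> complex \<times> complex) \<Rightarrow> (complex \<times> complex) set \<Rightarrow> bool" where
  "holo_disc_map \<phi> U \<longleftrightarrow> (\<lambda>l. fst (\<phi> l)) holomorphic_on disc \<and> (\<lambda>l. snd (\<phi> l)) holomorphic_on disc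
     \<and> \<phi> ` disc \<subseteq> U"

definition complex_geodesic :: "(complex \<Rightarrow> complex \<times> complex) \<Rightarrow> (complex \<times> complex) set \<Rightarrow> bool" where
  "complex_geodesic \<phi> U \<longleftrightarrow> holo_disc_map \<phi> U \<and>
     (\<forall>l\<in>disc. \<forall>m\<in>disc. carath U (\<phi> l) (\<phi> m) = poincare l m)"

end

theory Submission imports Defs "HOL-Complex_Analysis.Complex_Analysis"
begin

definition mob :: "complex \<Rightarrow> complex \<Rightarrow> complex" where
  "mob w z = (z - w) / (1 - cnj w * z)"

lemma mob_eq: "mob w z = Moebius_function 0 w z"
  by (simp add: mob_def Moebius_function_simple)

lemma mob_in: "w \<in> disc \<Longrightarrow> z \<in> disc \<Longrightarrow> mob w z \<in> disc"
  unfolding mob_eq using Moebius_function_norm_lt_1 by auto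

lemma mob_inv: "w \<in> disc \<Longrightarrow> z \<in> disc \<Longrightarrow> mob (-w) (mob w z) = z"
  unfolding mob_eq by (rule Moebius_function_compose) auto

lemma mob_hol: "w \<in> disc \<Longrightarrow> mob w holomorphic_on disc"
  unfolding mob_eq[abs_def] using Moebius_function_holomorphic by auto

lemma mob_zero: "mob w 0 = - w"
  by (simp add: mob_def)

lemma mob_self: "mob w w = 0"
  by (simp add: mob_def)

lemma den_nz: "w \<in> disc \<Longrightarrow> z \<in> disc \<Longrightarrow> 1 - cnj w * z \<noteq> 0"
proof
  assume "w \<in> disc" "z \<in> disc" "1 - cnj w * z = 0"
  then have "cmod (cnj w * z) = 1" by (metis eq_iff_diff_eq_0 norm_one)
  moreover have "cmod (cnj w * z) < 1" using \<open>w \<in> disc\<close> \<open>z \<in> disc\<close>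
    by (simp add: norm_mult) (metis abs_norm_cancel mult_le_one mult_strict_mono' norm_ge_zero less_le mult_less_cancel_right1 not_less abs_of_nonneg less_imp_le mult_strict_mono)
  ultimately show False by simp
qed

lemma mob_zero_iff: "w \<in> disc \<Longrightarrow> z \<in> disc \<Longrightarrow> mob w z = 0 \<longleftrightarrow> z = w"
  using den_nz by (auto simp: mob_def)

lemma schwarz_pick_aux:
  assumes hol: "f holomorphic_on disc" and fD: "f ` disc \<subseteq> disc"
    and a: "a \<in> disc" and b: "b \<in> disc"
  defines "G \<equiv> \<lambda>z. mob (f b) (f (mob (-b) z))"
  shows "G holomorphic_on disc" "G 0 = 0" "\<And>z. cmod z < 1 \<Longrightarrow> cmod (G z) < 1"
    "G (mob b a) = mob (f b) (f a)" "\<And>z. z \<in> disc \<Longrightarrow> G (mob b z) = mob (f b) (f z)"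
proof -
  have fb: "f b \<in> disc" using fD b by blast
  have mb: "mob (-b) ` disc \<subseteq> disc" using mob_in b by auto
  have "(\<lambda>z. f (mob (-b) z)) holomorphic_on disc"
    using holomorphic_on_compose_gen[OF mob_hol hol mb] b by (auto simp: o_def)
  then show "G holomorphic_on disc" unfolding G_def
    using holomorphic_on_compose_gen[OF _ mob_hol[OF fb], of "\<lambda>z. f (mob (-b) z)" disc] fD mb
    by (auto simp: o_def)
  show "G 0 = 0" by (simp add: G_def mob_zero mob_self)
  show "cmod (G z) < 1" if "cmod z < 1" for z
  proof -
    have "z \<in> disc" using that by simp
    then have "mob (-b) z \<in> disc" using mob_in b by auto
    then have "f (mob (-b) z) \<in> disc" using fD by blast
    then show ?thesis using mob_in[OF fb] by (simp add: G_def)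
  qed
  show G': "G (mob b z) = mob (f b) (f z)" if "z \<in> disc" for z
    using mob_inv[OF b that] by (simp add: G_def)
  show "G (mob b a) = mob (f b) (f a)" using G'[OF a] .
qed

lemma schwarz_pick:
  assumes hol: "f holomorphic_on disc" and fD: "f ` disc \<subseteq> disc"
    and a: "a \<in> disc" and b: "b \<in> disc"
  shows "cmod (mob (f b) (f a)) \<le> cmod (mob b a)"
proof -
  note S = schwarz_pick_aux[OF assms]
  have "mob b a \<in> disc" using mob_in a b by auto
  then show ?thesis using Schwarz_Lemma(1)[OF S(1) S(2) S(3), of "mob b a"] S(4) by auto
qed

lemma schwarz_pick_eq:
  assumes hol: "f holomorphic_on disc" and fD: "f ` disc \<subseteq> disc"
    and a: "a \<in> disc" and b: "b \<in> disc" and ab: "a \<noteq> b"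
    and eq: "cmod (mob (f b) (f a)) = cmod (mob b a)"
  shows "\<exists>c. cmod c = 1 \<and> (\<forall>z\<in>disc. f z = mob (- f b) (c * mob b z))"
proof -
  note S = schwarz_pick_aux[OF hol fD a b]
  have xi: "mob b a \<in> disc" using mob_in a b by auto
  have nz: "mob b a \<noteq> 0" using mob_zero_iff[OF b a] ab by auto
  obtain c where c: "\<forall>z. cmod z < 1 \<longrightarrow> mob (f b) (f (mob (-b) z)) = c * z" "cmod c = 1"
  proof -
    have "\<exists>z. cmod z < 1 \<and> z \<noteq> 0 \<and> cmod (mob (f b) (f (mob (-b) z))) = cmod z"
    proof -
      have "cmod (mob b a) < 1 \<and> mob b a \<noteq> 0 \<and> cmod (mob (f b) (f (mob (-b) (mob b a)))) = cmod (mob b a)"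
        using xi nz eq S(4) by auto
      then show ?thesis by blast
    qed
    then have "\<exists>c. (\<forall>z. cmod z < 1 \<longrightarrow> mob (f b) (f (mob (-b) z)) = c * z) \<and> cmod c = 1"
      apply (intro Schwarz_Lemma(3)[of "\<lambda>z. mob (f b) (f (mob (-b) z))" "mob b a"])
      using S xi by auto
    then show ?thesis using that by blast
  qed
  have fb: "f b \<in> disc" using fD b by blast
  have "f z = mob (- f b) (c * mob b z)" if z: "z \<in> disc" for z
  proof -
    have "mob b z \<in> disc" using mob_in b z by auto
    then have "c * mob b z = mob (f b) (f z)" using c(1) S(5)[OF z] by simp
    moreover have "f z \<in> disc" using fD z by blast
    ultimately show ?thesis using mob_inv[OF fb] by simp
  qed
  then show ?thesis using c(2) by blast
qed


lemma artanh_mono: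
  fixes x y :: real
  assumes "0 \<le> x" "x \<le> y" "y < 1"
  shows "artanh x \<le> artanh y"
proof -
  have "(1 + x) / (1 - x) \<le> (1 + y) / (1 - y)"
    using assms by (simp add: divide_simps) (simp add: algebra_simps)
  moreover have "0 < (1 + x) / (1 - x)" using assms by simp
  ultimately show ?thesis unfolding artanh_def by simp
qed

lemma artanh_inj:
  fixes x y :: real
  assumes "0 \<le> x" "x < 1" "0 \<le> y" "y < 1" "artanh x = artanh y"
  shows "x = y"
proof -
  have px: "0 < (1 + x) / (1 - x)" and py: "0 < (1 + y) / (1 - y)" using assms by simp_all
  have "ln ((1 + x) / (1 - x)) = ln ((1 + y) / (1 - y))" using assms(5) unfolding artanh_def by simp
  then have "(1 + x) / (1 - x) = (1 + y) / (1 - y)" using px py by simp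
  then have "(1 + x) * (1 - y) = (1 + y) * (1 - x)" using assms by (simp add: divide_simps)
  then show ?thesis by (simp add: algebra_simps)
qed

lemma poincare_mob: "poincare a b = artanh (cmod (mob b a))"
  by (simp add: poincare_def mob_def)

lemma poincare_contract:
  assumes "f holomorphic_on disc" "f ` disc \<subseteq> disc" "a \<in> disc" "b \<in> disc"
  shows "poincare (f a) (f b) \<le> poincare a b"
  unfolding poincare_mob using schwarz_pick[OF assms] mob_in[of b a] assms(3,4)
  by (intro artanh_mono) auto

lemma holo2_comp:
  assumes F: "holo2 F U" and g1: "g1 holomorphic_on disc" and g2: "g2 holomorphic_on disc"
    and gU: "\<And>l. l \<in> disc \<Longrightarrow> (g1 l, g2 l) \<in> U"
  shows "(\<lambda>l. F (g1 l, g2 l)) holomorphic_on disc"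
  unfolding holomorphic_on_open[OF open_ball]
proof
  fix l :: complex assume l: "l \<in> disc"
  obtain d1 where d1: "(g1 has_field_derivative d1) (at l)"
    using g1 l unfolding holomorphic_on_open[OF open_ball] by blast
  obtain d2 where d2: "(g2 has_field_derivative d2) (at l)"
    using g2 l unfolding holomorphic_on_open[OF open_ball] by blast
  obtain A B where AB: "(F has_derivative (\<lambda>h. A * fst h + B * snd h)) (at (g1 l, g2 l))"
    using F gU[OF l] unfolding holo2_def by blast
  have P: "((\<lambda>l. (g1 l, g2 l)) has_derivative (\<lambda>h. ((*) d1 h, (*) d2 h))) (at l)"
    by (rule has_derivative_Pair[OF has_field_derivative_imp_has_derivative[OF d1]
        has_field_derivative_imp_has_derivative[OF d2]])
  have C: "((F \<circ> (\<lambda>l. (g1 l, g2 l))) has_derivative ((\<lambda>h. A * fst h + B * snd h) \<circ> (\<lambda>h. ((*) d1 h, (*) d2 h)))) (at l)"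
    by (rule diff_chain_at[OF P]) (simp only: AB)
  have E: "((\<lambda>h. A * fst h + B * snd h) \<circ> (\<lambda>h. ((*) d1 h, (*) d2 h))) = (*) (A * d1 + B * d2)"
    by (simp add: fun_eq_iff o_def algebra_simps)
  have "((\<lambda>l. F (g1 l, g2 l)) has_field_derivative (A * d1 + B * d2)) (at l)"
    unfolding has_field_derivative_def using C unfolding E by (simp add: o_def)
  then show "\<exists>f'. ((\<lambda>l. F (g1 l, g2 l)) has_field_derivative f') (at l)" by blast
qed

lemma holo2_linear: "holo2 (\<lambda>x. a * fst x + b * snd x) U"
  unfolding holo2_def
proof (intro ballI exI)
  fix z
  show "((\<lambda>x. a * fst x + b * snd x) has_derivative (\<lambda>h. a * fst h + b * snd h)) (at z)"
    by (rule bounded_linear_imp_has_derivative, rule bounded_linear_add,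
        rule bounded_linear_compose[OF bounded_linear_mult_right bounded_linear_fst],
        rule bounded_linear_compose[OF bounded_linear_mult_right bounded_linear_snd])
qed

lemma holo2_half: "holo2 (\<lambda>x. fst x / 2) U"
proof -
  have "(\<lambda>x. fst x / 2) = (\<lambda>x::complex\<times>complex. (1/2) * fst x + 0 * snd x)" by auto
  then show ?thesis using holo2_linear by metis
qed

lemma holo2_snd: "holo2 (\<lambda>x. snd x) U"
proof -
  have "(\<lambda>x. snd x) = (\<lambda>x::complex\<times>complex. 0 * fst x + 1 * snd x)" by auto
  then show ?thesis using holo2_linear by metis
qed

lemma G2_E:
  assumes "x \<in> G2"
  obtains z1 z2 where "z1 \<in> disc" "z2 \<in> disc" "x = (z1 + z2, z1 * z2)"
  using assms unfolding G2_def by blast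

lemma G2_I: "z1 \<in> disc \<Longrightarrow> z2 \<in> disc \<Longrightarrow> (z1 + z2, z1 * z2) \<in> G2"
  unfolding G2_def by blast

lemma G2_s: assumes "x \<in> G2" shows "fst x / 2 \<in> disc"
proof -
  obtain z1 z2 where z: "z1 \<in> disc" "z2 \<in> disc" "x = (z1 + z2, z1 * z2)" using G2_E[OF assms] .
  have "cmod (z1 + z2) \<le> cmod z1 + cmod z2" by (rule norm_triangle_ineq)
  then have "cmod (z1 + z2) < 2" using z by simp
  then show ?thesis using z by (simp add: norm_divide)
qed

lemma G2_ne2: assumes "x \<in> G2" shows "2 - fst x \<noteq> 0"
  using G2_s[OF assms] by auto

lemma G2_p: assumes "x \<in> G2" shows "snd x \<in> disc"
proof -
  obtain z1 z2 where z: "z1 \<in> disc" "z2 \<in> disc" "x = (z1 + z2, z1 * z2)" using G2_E[OF assms] .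
  have "cmod z1 * cmod z2 < 1 * 1"
    using z by (intro mult_strict_mono) auto
  then show ?thesis using z by (simp add: norm_mult)
qed


definition Phi :: "complex \<times> complex \<Rightarrow> complex" where
  "Phi x = (2 * snd x - fst x) / (2 - fst x)"

lemma Phi_ident:
  fixes z1 z2 :: complex
  shows "(2 - (z1 + z2)) * cnj (2 - (z1 + z2)) - (2 * (z1 * z2) - (z1 + z2)) * cnj (2 * (z1 * z2) - (z1 + z2))
    = 2 * ((1 - z1 * cnj z1) * ((1 - z2) * cnj (1 - z2)) + (1 - z2 * cnj z2) * ((1 - z1) * cnj (1 - z1)))"
  by (simp add: algebra_simps)

lemma G2_Phi: assumes "x \<in> G2" shows "Phi x \<in> disc"
proof -
  obtain z1 z2 where z: "z1 \<in> disc" "z2 \<in> disc" "x = (z1 + z2, z1 * z2)" using G2_E[OF assms] .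
  define N where "N = 2 * (z1 * z2) - (z1 + z2)"
  define D where "D = 2 - (z1 + z2)"
  have "complex_of_real ((cmod D)^2 - (cmod N)^2) =
     complex_of_real (2 * ((1 - (cmod z1)^2) * (cmod (1 - z2))^2 + (1 - (cmod z2)^2) * (cmod (1 - z1))^2))"
    apply (simp only: of_real_diff of_real_mult of_real_add of_real_numeral of_real_1 complex_norm_square)
    using Phi_ident[of z1 z2] unfolding N_def D_def by (simp add: algebra_simps)
  then have eq: "(cmod D)^2 - (cmod N)^2 = 2 * ((1 - (cmod z1)^2) * (cmod (1 - z2))^2 + (1 - (cmod z2)^2) * (cmod (1 - z1))^2)"
    using of_real_eq_iff by blast
  have z1n: "cmod z1 < 1" and z2n: "cmod z2 < 1" using z by auto
  have "z2 \<noteq> 1" using z2n by auto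
  then have "0 < (cmod (1 - z2))^2" by simp
  moreover have "0 < 1 - (cmod z1)^2" using z1n by (simp add: power_less_one_iff abs_less_iff)
  moreover have "0 \<le> (1 - (cmod z2)^2) * (cmod (1 - z1))^2"
    using z2n by (intro mult_nonneg_nonneg) (auto simp: power_le_one)
  ultimately have "(cmod N)^2 < (cmod D)^2" using eq
    by (smt (verit) mult_pos_pos)
  then have "cmod N < cmod D" by (simp add: power_less_imp_less_base)
  then show ?thesis using z by (simp add: Phi_def N_def D_def norm_divide divide_less_eq)
qed

lemma holo2_Phi: "holo2 Phi G2"
  unfolding holo2_def
proof
  fix z assume z: "z \<in> G2"
  have g: "2 - fst z \<noteq> 0" using G2_ne2[OF z] .
  have f': "((\<lambda>x. 2 * snd x - fst x) has_derivative (\<lambda>h. 2 * snd h - fst h)) (at z)"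
    by (rule bounded_linear_imp_has_derivative, rule bounded_linear_sub,
        rule bounded_linear_compose[OF bounded_linear_mult_right bounded_linear_snd],
        rule bounded_linear_fst)
  have g': "((\<lambda>x. 2 - fst x) has_derivative (\<lambda>h. 0 - fst h)) (at z)"
    by (rule has_derivative_diff[OF has_derivative_const has_derivative_fst[OF has_derivative_ident]])
  have D: "(Phi has_derivative (\<lambda>h. ((2 * snd h - fst h) * (2 - fst z) - (2 * snd z - fst z) * (0 - fst h)) / ((2 - fst z) * (2 - fst z)))) (at z)"
    unfolding Phi_def[abs_def] by (rule has_derivative_divide'[OF f' g' g])
  show "\<exists>a b. (Phi has_derivative (\<lambda>h. a * fst h + b * snd h)) (at z)"
    apply (rule exI[of _ "((2 * snd z - fst z) - (2 - fst z)) / ((2 - fst z) * (2 - fst z))"])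
    apply (rule exI[of _ "2 / (2 - fst z)"])
    apply (rule has_derivative_eq_rhs[OF D])
    using g by (simp add: fun_eq_iff divide_simps, simp add: algebra_simps)
qed

lemma geodesic_left_inverse:
  assumes phi: "holo_disc_map \<phi> G2" and F: "holo2 F G2" "F ` G2 \<subseteq> disc"
    and inv: "\<And>l. l \<in> disc \<Longrightarrow> F (\<phi> l) = l"
  shows "complex_geodesic \<phi> G2"
  unfolding complex_geodesic_def
proof (intro conjI phi ballI)
  fix l m assume l: "l \<in> disc" and m: "m \<in> disc"
  define A where "A = {f. holo2 f G2 \<and> f ` G2 \<subseteq> disc}"
  have FA: "F \<in> A" using F by (simp add: A_def)
  have bnd: "poincare (f (\<phi> l)) (f (\<phi> m)) \<le> poincare l m" if f: "f \<in> A" for f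
  proof -
    have h1: "(\<lambda>l. fst (\<phi> l)) holomorphic_on disc" "(\<lambda>l. snd (\<phi> l)) holomorphic_on disc"
      and iG: "\<phi> ` disc \<subseteq> G2" using phi by (auto simp: holo_disc_map_def)
    have "(\<lambda>l. f (fst (\<phi> l), snd (\<phi> l))) holomorphic_on disc"
      using f iG by (intro holo2_comp[OF _ h1]) (auto simp: A_def)
    then have hol: "(\<lambda>l. f (\<phi> l)) holomorphic_on disc" by simp
    have "(\<lambda>l. f (\<phi> l)) ` disc \<subseteq> disc" using f iG by (auto simp: A_def)
    from poincare_contract[OF hol this l m] show ?thesis .
  qed
  have "carath G2 (\<phi> l) (\<phi> m) = (SUP f\<in>A. poincare (f (\<phi> l)) (f (\<phi> m)))"
    by (simp add: carath_def A_def)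
  also have "\<dots> = poincare l m"
  proof (rule antisym)
    show "(SUP f\<in>A. poincare (f (\<phi> l)) (f (\<phi> m))) \<le> poincare l m"
      using FA bnd by (intro cSUP_least) auto
    have "poincare l m = poincare (F (\<phi> l)) (F (\<phi> m))" using inv l m by simp
    also have "\<dots> \<le> (SUP f\<in>A. poincare (f (\<phi> l)) (f (\<phi> m)))"
      using FA bnd by (intro cSUP_upper bdd_aboveI2) auto
    finally show "poincare l m \<le> (SUP f\<in>A. poincare (f (\<phi> l)) (f (\<phi> m)))" .
  qed
  finally show "carath G2 (\<phi> l) (\<phi> m) = poincare l m" .
qed


definition psi :: "complex \<Rightarrow> complex \<times> complex" where
  "psi l = (2 * l, l ^ 2)"

lemma royal_psi: "royal = psi ` disc"
  unfolding royal_def psi_def by auto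

lemma psi_G2: assumes "l \<in> disc" shows "psi l \<in> G2"
proof -
  have "psi l = (l + l, l * l)" unfolding psi_def by (simp add: power2_eq_square)
  then show ?thesis using G2_I[OF assms assms] by simp
qed

lemma psi_geodesic: "complex_geodesic psi G2"
proof (rule geodesic_left_inverse[OF _ holo2_half])
  show "holo_disc_map psi G2"
    unfolding holo_disc_map_def psi_def using psi_G2
    by (auto intro!: holomorphic_intros simp: psi_def)
  show "(\<lambda>x. fst x / 2) ` G2 \<subseteq> disc" using G2_s by auto
  show "fst (psi l) / 2 = l" for l by (simp add: psi_def)
qed

lemma carath_royal: "\<alpha> \<in> disc \<Longrightarrow> \<beta> \<in> disc \<Longrightarrow> carath G2 (psi \<alpha>) (psi \<beta>) = poincare \<alpha> \<beta>"
  using psi_geodesic unfolding complex_geodesic_def by blast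

definition flat :: "complex \<Rightarrow> complex \<times> complex" where
  "flat l = (0, l)"

lemma flat_G2: assumes "l \<in> disc" shows "flat l \<in> G2"
proof -
  define w where "w = csqrt (- l)"
  have "cmod w < 1" using assms by (simp add: w_def)
  then have "w \<in> disc" "- w \<in> disc" by auto
  from G2_I[OF this] have "(w + - w, w * - w) \<in> G2" .
  moreover have "w * - w = l" using power2_csqrt[of "- l"] by (simp add: w_def power2_eq_square)
  ultimately show ?thesis by (simp add: flat_def)
qed

lemma flat_geodesic: "complex_geodesic flat G2"
proof (rule geodesic_left_inverse[OF _ holo2_snd])
  show "holo_disc_map flat G2"
    unfolding holo_disc_map_def flat_def using flat_G2
    by (auto intro!: holomorphic_intros simp: flat_def)
  show "(\<lambda>x. snd x) ` G2 \<subseteq> disc" using G2_p by auto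
  show "snd (flat l) = l" for l by (simp add: flat_def)
qed

lemma flat_royal: "flat ` disc \<inter> royal = {(0, 0)}"
proof
  show "flat ` disc \<inter> royal \<subseteq> {(0, 0)}"
    by (auto simp: flat_def royal_def)
  have "flat 0 = (0,0)" "psi 0 = (0,0)" by (simp_all add: flat_def psi_def)
  then show "{(0, 0)} \<subseteq> flat ` disc \<inter> royal"
    unfolding royal_psi by (metis Int_iff centre_in_ball empty_subsetI image_eqI insert_subset zero_less_one)
qed

definition n1 :: "complex \<Rightarrow> complex" where "n1 l = \<i> * (1 + l) - 2 * l"
definition d1 :: "complex \<Rightarrow> complex" where "d1 l = 2 + \<i> * (1 + l)"
definition n2 :: "complex \<Rightarrow> complex" where "n2 l = - \<i> * (1 + l) - 2 * l"
definition d2 :: "complex \<Rightarrow> complex" where "d2 l = 2 - \<i> * (1 + l)"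

lemma id1: "d1 l * cnj (d1 l) - n1 l * cnj (n1 l) = 4 * (1 - l * cnj l)"
  by (simp add: n1_def d1_def complex_eq_iff algebra_simps power2_eq_square)
lemma id2: "d2 l * cnj (d2 l) - n2 l * cnj (n2 l) = 4 * (1 - l * cnj l)"
  by (simp add: n2_def d2_def complex_eq_iff algebra_simps power2_eq_square)
lemma id3: "n1 l * d2 l - n2 l * d1 l = 4 * \<i> * (1 + l)^2"
  by (simp add: n1_def n2_def d1_def d2_def complex_eq_iff algebra_simps power2_eq_square)
lemma id4: "2 * n1 l * n2 l - (n1 l * d2 l + n2 l * d1 l) - 2 * l * d1 l * d2 l + l * (n1 l * d2 l + n2 l * d1 l) = 0"
  by (simp add: n1_def n2_def d1_def d2_def complex_eq_iff algebra_simps power2_eq_square)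

lemma one_plus_ne: assumes "l \<in> disc" shows "cmod (1 + l) < 2"
proof -
  have "cmod (1 + l) \<le> 1 + cmod l" using norm_triangle_ineq[of 1 l] by simp
  then show ?thesis using assms by simp
qed

lemma d_nz: assumes "l \<in> disc" shows "d1 l \<noteq> 0" "d2 l \<noteq> 0"
proof -
  have c: "cmod (\<i> * (1 + l)) < 2" using one_plus_ne[OF assms] by (simp add: norm_mult)
  show "d1 l \<noteq> 0"
  proof
    assume "d1 l = 0" then have "\<i> * (1 + l) = -2" by (simp add: d1_def add_eq_0_iff)
    then show False using c by simp
  qed
  show "d2 l \<noteq> 0"
  proof
    assume "d2 l = 0" then have "\<i> * (1 + l) = 2" by (simp add: d2_def)
    then show False using c by simp
  qed
qed

lemma quot_disc:
  assumes "d * cnj d - n * cnj n = 4 * (1 - l * cnj l)" "l \<in> disc" "d \<noteq> 0"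
  shows "n / d \<in> disc"
proof -
  have "complex_of_real ((cmod d)^2 - (cmod n)^2) = complex_of_real (4 * (1 - (cmod l)^2))"
    apply (simp only: of_real_diff of_real_mult of_real_numeral of_real_1 complex_norm_square)
    using assms(1) by simp
  then have eq: "(cmod d)^2 - (cmod n)^2 = 4 * (1 - (cmod l)^2)" using of_real_eq_iff by blast
  have "cmod l < 1" using assms(2) by simp
  then have "(cmod l)^2 < 1" by (simp add: power_less_one_iff abs_less_iff)
  then have "(cmod n)^2 < (cmod d)^2" using eq by simp
  then have "cmod n < cmod d" by (simp add: power_less_imp_less_base)
  then show ?thesis using assms(3) by (simp add: norm_divide divide_less_eq)
qed

definition z1 :: "complex \<Rightarrow> complex" where "z1 l = n1 l / d1 l"
definition z2 :: "complex \<Rightarrow> complex" where "z2 l = n2 l / d2 l"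
definition ex1 :: "complex \<Rightarrow> complex \<times> complex" where "ex1 l = (z1 l + z2 l, z1 l * z2 l)"

lemma z_disc: assumes "l \<in> disc" shows "z1 l \<in> disc" "z2 l \<in> disc"
  using quot_disc[OF id1 assms d_nz(1)[OF assms]] quot_disc[OF id2 assms d_nz(2)[OF assms]]
  by (simp_all add: z1_def z2_def)

lemma ex1_G2: "l \<in> disc \<Longrightarrow> ex1 l \<in> G2"
  using G2_I[OF z_disc] by (simp add: ex1_def)

lemma z_hol: "z1 holomorphic_on disc" "z2 holomorphic_on disc"
  unfolding z1_def[abs_def] z2_def[abs_def] n1_def n2_def d1_def[symmetric] d2_def[symmetric]
  using d_nz by (auto intro!: holomorphic_intros simp: d1_def d2_def)

lemma ex1_geodesic: "complex_geodesic ex1 G2"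
proof (rule geodesic_left_inverse[OF _ holo2_Phi])
  show "holo_disc_map ex1 G2"
    unfolding holo_disc_map_def ex1_def using ex1_G2 z_hol
    by (auto intro!: holomorphic_intros simp: ex1_def)
  show "Phi ` G2 \<subseteq> disc" using G2_Phi by auto
  fix l assume l: "l \<in> disc"
  have dn: "d1 l \<noteq> 0" "d2 l \<noteq> 0" using d_nz[OF l] by auto
  have s2: "2 - fst (ex1 l) \<noteq> 0" using G2_ne2[OF ex1_G2[OF l]] .
  have "2 * snd (ex1 l) - fst (ex1 l) = l * (2 - fst (ex1 l))"
    using id4[of l] dn by (simp add: ex1_def z1_def z2_def field_simps)
  then show "Phi (ex1 l) = l" using s2 by (simp add: Phi_def)
qed

lemma ex1_royal: "ex1 ` disc \<inter> royal = {}"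
proof (rule ccontr)
  assume "ex1 ` disc \<inter> royal \<noteq> {}"
  then obtain x where "x \<in> ex1 ` disc" "x \<in> psi ` disc" unfolding royal_psi by blast
  then obtain l m where l: "l \<in> disc" and eq: "ex1 l = psi m" by (metis imageE)
  have "z1 l + z2 l = 2 * m" "z1 l * z2 l = m^2" using eq by (simp_all add: ex1_def psi_def)
  moreover have "(z1 l - z2 l)^2 = (z1 l + z2 l)^2 - 4 * (z1 l * z2 l)" by algebra
  ultimately have "(z1 l - z2 l)^2 = 0" by (simp add: power_mult_distrib)
  then have "z1 l = z2 l" by simp
  then have "n1 l * d2 l - n2 l * d1 l = 0" using d_nz[OF l] by (simp add: z1_def z2_def frac_eq_eq)
  then have "(1 + l)^2 = 0" using id3[of l] by simp
  then have "l = -1" by (simp add: add_eq_0_iff)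
  then show False using l by simp
qed


lemma two_points:
  assumes geo: "complex_geodesic \<phi> G2" and a: "a \<in> disc" and b: "b \<in> disc"
    and ra: "\<phi> a \<in> royal" and rb: "\<phi> b \<in> royal" and ne: "\<phi> a \<noteq> \<phi> b"
  shows "\<phi> ` disc = royal"
proof -
  have hd: "holo_disc_map \<phi> G2" using geo by (simp add: complex_geodesic_def)
  have h1: "(\<lambda>l. fst (\<phi> l)) holomorphic_on disc" and h2: "(\<lambda>l. snd (\<phi> l)) holomorphic_on disc"
    and iG: "\<And>l. l \<in> disc \<Longrightarrow> \<phi> l \<in> G2" using hd by (auto simp: holo_disc_map_def)
  obtain \<alpha> where al: "\<alpha> \<in> disc" and pa: "\<phi> a = psi \<alpha>" using ra unfolding royal_psi by blast
  obtain \<beta> where be: "\<beta> \<in> disc" and pb: "\<phi> b = psi \<beta>" using rb unfolding royal_psi by blast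
  have ab: "a \<noteq> b" using ne by auto
  have "poincare a b = carath G2 (\<phi> a) (\<phi> b)" using geo a b by (simp add: complex_geodesic_def)
  also have "\<dots> = poincare \<alpha> \<beta>" using pa pb carath_royal[OF al be] by simp
  finally have peq: "poincare a b = poincare \<alpha> \<beta>" .
  have meq: "cmod (mob \<beta> \<alpha>) = cmod (mob b a)"
  proof (rule artanh_inj)
    show "0 \<le> cmod (mob \<beta> \<alpha>)" "0 \<le> cmod (mob b a)" by auto
    show "cmod (mob \<beta> \<alpha>) < 1" using mob_in[OF be al] by simp
    show "cmod (mob b a) < 1" using mob_in[OF b a] by simp
    show "artanh (cmod (mob \<beta> \<alpha>)) = artanh (cmod (mob b a))" using peq by (simp add: poincare_mob)
  qed
  define g where "g l = fst (\<phi> l) / 2" for l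
  define h where "h l = - ((2 * snd (\<phi> l) - fst (\<phi> l)) / (2 - fst (\<phi> l)))" for l
  have gh: "g holomorphic_on disc" unfolding g_def[abs_def] using h1 by (intro holomorphic_intros) auto
  have hh: "h holomorphic_on disc" unfolding h_def[abs_def] using h1 h2 G2_ne2[OF iG]
    by (intro holomorphic_intros) auto
  have gD: "g ` disc \<subseteq> disc" using G2_s[OF iG] by (auto simp: g_def)
  have hD: "h ` disc \<subseteq> disc"
  proof
    fix y assume "y \<in> h ` disc"
    then obtain l where l: "l \<in> disc" and y: "y = h l" by blast
    have "Phi (\<phi> l) \<in> disc" using G2_Phi[OF iG[OF l]] .
    then show "y \<in> disc" by (simp add: y h_def Phi_def)
  qed
  have a1: "\<alpha> \<noteq> 1" and b1: "\<beta> \<noteq> 1" using al be by auto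
  have ga: "g a = \<alpha>" and gb: "g b = \<beta>" using pa pb by (simp_all add: g_def psi_def)
  have ha: "h a = \<alpha>"
  proof -
    have "2 - 2 * \<alpha> \<noteq> 0" using a1 by simp
    then show ?thesis using pa by (simp add: h_def psi_def field_simps power2_eq_square)
  qed
  have hb: "h b = \<beta>"
  proof -
    have "2 - 2 * \<beta> \<noteq> 0" using b1 by simp
    then show ?thesis using pb by (simp add: h_def psi_def field_simps power2_eq_square)
  qed
  obtain c where c: "cmod c = 1" "\<forall>z\<in>disc. g z = mob (- g b) (c * mob b z)"
    using schwarz_pick_eq[OF gh gD a b ab] meq ga gb by auto
  obtain c' where c': "cmod c' = 1" "\<forall>z\<in>disc. h z = mob (- h b) (c' * mob b z)"
    using schwarz_pick_eq[OF hh hD a b ab] meq ha hb by auto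
  define \<xi> where "\<xi> = mob b a"
  have xi: "\<xi> \<in> disc" using mob_in[OF b a] by (simp add: \<xi>_def)
  have xi0: "\<xi> \<noteq> 0" using mob_zero_iff[OF b a] ab by (simp add: \<xi>_def)
  have cxi: "c * \<xi> \<in> disc" "c' * \<xi> \<in> disc" using xi c(1) c'(1) by (simp_all add: norm_mult)
  have mbinv: "mob \<beta> (mob (- \<beta>) w) = w" if "w \<in> disc" for w
    using mob_inv[of "- \<beta>" w] be that by simp
  have "mob (- \<beta>) (c * \<xi>) = mob (- \<beta>) (c' * \<xi>)"
    using c(2) c'(2) a ga ha gb hb by (simp add: \<xi>_def)
  then have "c * \<xi> = c' * \<xi>" using mbinv[OF cxi(1)] mbinv[OF cxi(2)] by metis
  then have cc: "c = c'" using xi0 by simp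
  have gh_eq: "g z = h z" if "z \<in> disc" for z using c(2) c'(2) cc gb hb that by simp
  have phi_royal: "\<phi> z = psi (g z)" if z: "z \<in> disc" for z
  proof -
    have s2: "2 - fst (\<phi> z) \<noteq> 0" using G2_ne2[OF iG[OF z]] .
    have "fst (\<phi> z) / 2 = - ((2 * snd (\<phi> z) - fst (\<phi> z)) / (2 - fst (\<phi> z)))"
      using gh_eq[OF z] by (simp add: g_def h_def)
    then have "fst (\<phi> z) * (2 - fst (\<phi> z)) = - 2 * (2 * snd (\<phi> z) - fst (\<phi> z))"
      using s2 by (simp add: field_simps)
    then have "snd (\<phi> z) = (fst (\<phi> z) / 2)^2"
      by (simp add: power2_eq_square algebra_simps)
    then show ?thesis by (simp add: psi_def g_def prod_eq_iff)
  qed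
  show ?thesis
  proof
    show "\<phi> ` disc \<subseteq> royal" unfolding royal_psi using phi_royal gD by auto
    show "royal \<subseteq> \<phi> ` disc" unfolding royal_psi
    proof
      fix y assume "y \<in> psi ` disc"
      then obtain \<mu> where mu: "\<mu> \<in> disc" and y: "y = psi \<mu>" by blast
      define w where "w = mob \<beta> \<mu> / c"
      have c0: "c \<noteq> 0" using c(1) by auto
      have w: "w \<in> disc" using mob_in[OF be mu] c(1) by (simp add: w_def norm_divide)
      define z where "z = mob (- b) w"
      have z: "z \<in> disc" using mob_in[of "- b" w] b w by (simp add: z_def)
      have mz: "mob b z = w" using mob_inv[of "- b" w] b w by (simp add: z_def)
      have "g z = mob (- \<beta>) (c * w)" using c(2) z mz gb by simp
      also have "c * w = mob \<beta> \<mu>" using c0 by (simp add: w_def)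
      also have "mob (- \<beta>) (mob \<beta> \<mu>) = \<mu>" using mob_inv[OF be mu] .
      finally have "\<phi> z = y" using phi_royal[OF z] y by simp
      then show "y \<in> \<phi> ` disc" using z by blast
    qed
  qed
qed

lemma royal_facts: "royal \<noteq> {}" "\<not> (\<exists>p. royal = {p})"
proof -
  have "psi 0 \<in> royal" "psi (1/2) \<in> royal" unfolding royal_psi by auto
  moreover have "psi 0 \<noteq> psi (1/2)" by (simp add: psi_def)
  ultimately show "royal \<noteq> {}" "\<not> (\<exists>p. royal = {p})" by (blast, metis singletonD)
qed

theorem corollary4:
  shows "(\<forall>\<phi>. complex_geodesic \<phi> G2 \<longrightarrow>
           ((\<phi> ` disc \<inter> royal = {} \<and> \<not> (\<exists>p. \<phi> ` disc \<inter> royal = {p}) \<and> \<phi> ` disc \<noteq> royal) \<or>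
            (\<phi> ` disc \<inter> royal \<noteq> {} \<and> (\<exists>p. \<phi> ` disc \<inter> royal = {p}) \<and> \<phi> ` disc \<noteq> royal) \<or>
            (\<phi> ` disc \<inter> royal \<noteq> {} \<and> \<not> (\<exists>p. \<phi> ` disc \<inter> royal = {p}) \<and> \<phi> ` disc = royal)))
       \<and> (\<exists>\<phi>. complex_geodesic \<phi> G2 \<and> \<phi> ` disc \<inter> royal = {})
       \<and> (\<exists>\<phi>. complex_geodesic \<phi> G2 \<and> (\<exists>p. \<phi> ` disc \<inter> royal = {p}))
       \<and> (\<exists>\<phi>. complex_geodesic \<phi> G2 \<and> \<phi> ` disc = royal)"
proof (intro conjI allI impI)
  fix \<phi> assume geo: "complex_geodesic \<phi> G2"
  let ?I = "\<phi> ` disc \<inter> royal"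
  show "(?I = {} \<and> \<not> (\<exists>p. ?I = {p}) \<and> \<phi> ` disc \<noteq> royal) \<or>
        (?I \<noteq> {} \<and> (\<exists>p. ?I = {p}) \<and> \<phi> ` disc \<noteq> royal) \<or>
        (?I \<noteq> {} \<and> \<not> (\<exists>p. ?I = {p}) \<and> \<phi> ` disc = royal)"
  proof (cases "?I = {}")
    case True
    then have "\<phi> ` disc \<noteq> royal" using royal_facts by auto
    then show ?thesis using True by auto
  next
    case False
    show ?thesis
    proof (cases "\<exists>p. ?I = {p}")
      case True
      then have "\<phi> ` disc \<noteq> royal" using royal_facts by auto
      then show ?thesis using True False by auto
    next
      case notsing: False
      obtain x where x: "x \<in> ?I" using False by blast
      obtain y where y: "y \<in> ?I" "y \<noteq> x" using notsing x by blast
      obtain a where a: "a \<in> disc" "\<phi> a = x" using x by blast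
      obtain b where b: "b \<in> disc" "\<phi> b = y" using y by blast
      have "\<phi> ` disc = royal"
        using two_points[OF geo a(1) b(1)] a b x y by auto
      then show ?thesis using False notsing by auto
    qed
  qed
next
  show "\<exists>\<phi>. complex_geodesic \<phi> G2 \<and> \<phi> ` disc \<inter> royal = {}"
    using ex1_geodesic ex1_royal by blast
  show "\<exists>\<phi>. complex_geodesic \<phi> G2 \<and> (\<exists>p. \<phi> ` disc \<inter> royal = {p})"
    using flat_geodesic flat_royal by blast
  show "\<exists>\<phi>. complex_geodesic \<phi> G2 \<and> \<phi> ` disc = royal"
    using psi_geodesic royal_psi by blast
qed

end
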